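(* Let $(X,d,\preccurlyeq)$ be a preordered $s$-regular $b$-metric space. Let $T,S:X\to X$ be self mappings and suppose there exists $x_0\in X$ such that $T(x_0)\succcurlyeq S(x_0)$. Suppose that: (i) $T$ is isotone; (ii) $S$ covers $T$ from above on the set $O^*_X(x_0)$; (iii) every chain $C\in\mathcal{C}^*(x_0,T,S,\preccurlyeq)$ has an upper bound $w\in X$ (i.e. $x\preccurlyeq w$ for all $x\in C$) satisfying $w\succcurlyeq T(w)$, and there exists $z\in X$ such that $S^i(z)\succcurlyeq S(w)\succcurlyeq T(w)$ for all $i\in\mathbb{N}$ and $d(T^i(w),S^i(z))\to 0$ as $i\to\infty$. Then the set $\mathrm{Coin}(T,S)\cap O^*_X(x_0)$ is nonempty and contains a maximal element.
   Context: A $b$-metric space with coefficient $s\ge 1$ is a nonempty set $X$ with a function $d:X\times X\to[0,\infty)$ such that for all $x,y,z\in X$: $d(x,y)=0$ iff $x=y$; $d(x,y)=d(y,x)$; $d(x,y)\le s[d(x,z)+d(z,y)]$. A preorder is a reflexive and transitive binary relation $\preccurlyeq$; $x\succcurlyeq y$ means $y\preccurlyeq x$, and $x\prec y$ means $x\preccurlyeq y$ and $x\ne y$. A preordered $s$-regular $b$-metric space $(X,d,\preccurlyeq)$ is a $b$-metric space with coefficient $s\ge1$ equipped with a preorder $\preccurlyeq$ such that for all $x,y,z\in X$, $x\preccurlyeq y\preccurlyeq z$ implies $\max\{d(x,y),d(y,z)\}\le s^2 d(x,z)$. A chain is a subset of $X$ any two elements of which are comparable. A map $T$ is isotone if $x\preccurlyeq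 y$ implies $T(x)\preccurlyeq T(y)$. $T^i$ denotes the $i$-th iterate. For $x_0\in X$, $O^*_X(x_0)=\{x\in X: x\succcurlyeq x_0\}$. $\mathrm{Coin}(T,S)=\{x: T(x)=S(x)\}$. A map $S$ covers a map $T$ from above on a set $A\subset X$ if for every $x\in A$ with $T(x)\succcurlyeq S(x)$ there exists $y\in X$ with $y\succcurlyeq x$ and $S(y)=T(x)$. $\mathcal{C}^*(T,S,\preccurlyeq)$ is the set of chains $C\subset X$ such that for all $x,y\in C$: $T(x)\succcurlyeq S(x)$; $x\prec y$ implies $T(x)\preccurlyeq S(y)$; and $S(C)\subset T(X)$. $\mathcal{C}^*(x_0,T,S,\preccurlyeq)=\{C\in\mathcal{C}^*(T,S,\preccurlyeq): C\subset O^*_X(x_0)\text{ and } S(C)\subset T(O^*_X(x_0))\}$. A maximal element of a set $A\subset X$ is an element $w\in A$ such that there is no $u\in A$ with $w\prec u$. *)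

theory Defs
  imports "HOL-Analysis.Analysis"
begin

definition b_metric :: "'a set \<Rightarrow> ('a \<Rightarrow> 'a \<Rightarrow> real) \<Rightarrow> real \<Rightarrow> bool" where
  "b_metric X d s \<longleftrightarrow> X \<noteq> {} \<and> s \<ge> 1 \<and>
     (\<forall>x\<in>X. \<forall>y\<in>X. d x y \<ge> 0) \<and>
     (\<forall>x\<in>X. \<forall>y\<in>X. d x y = 0 \<longleftrightarrow> x = y) \<and>
     (\<forall>x\<in>X. \<forall>y\<in>X. d x y = d y x) \<and>
     (\<forall>x\<in>X. \<forall>y\<in>X. \<forall>z\<in>X. d x y \<le> s * (d x z + d z y))"

definition preorder_on :: "'a set \<Rightarrow> ('a \<Rightarrow> 'a \<Rightarrow> bool) \<Rightarrow> bool" where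
  "preorder_on X le \<longleftrightarrow> (\<forall>x\<in>X. le x x) \<and>
     (\<forall>x\<in>X. \<forall>y\<in>X. \<forall>z\<in>X. le x y \<longrightarrow> le y z \<longrightarrow> le x z)"

definition preordered_s_regular_b_metric ::
  "'a set \<Rightarrow> ('a \<Rightarrow> 'a \<Rightarrow> real) \<Rightarrow> real \<Rightarrow> ('a \<Rightarrow> 'a \<Rightarrow> bool) \<Rightarrow> bool" where
  "preordered_s_regular_b_metric X d s le \<longleftrightarrow> b_metric X d s \<and> preorder_on X le \<and>
     (\<forall>x\<in>X. \<forall>y\<in>X. \<forall>z\<in>X. le x y \<longrightarrow> le y z \<longrightarrow> max (d x y) (d y z) \<le> s\<^sup>2 * d x z)"

definition strict :: "('a \<Rightarrow> 'a \<Rightarrow> bool) \<Rightarrow> 'a \<Rightarrow> 'a \<Rightarrow> bool" where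
  "strict le x y \<longleftrightarrow> le x y \<and> x \<noteq> y"

definition is_chain :: "'a set \<Rightarrow> ('a \<Rightarrow> 'a \<Rightarrow> bool) \<Rightarrow> 'a set \<Rightarrow> bool" where
  "is_chain X le C \<longleftrightarrow> C \<subseteq> X \<and> (\<forall>x\<in>C. \<forall>y\<in>C. le x y \<or> le y x)"

definition isotone :: "'a set \<Rightarrow> ('a \<Rightarrow> 'a \<Rightarrow> bool) \<Rightarrow> ('a \<Rightarrow> 'a) \<Rightarrow> bool" where
  "isotone X le T \<longleftrightarrow> (\<forall>x\<in>X. \<forall>y\<in>X. le x y \<longrightarrow> le (T x) (T y))"

definition Ostar :: "'a set \<Rightarrow> ('a \<Rightarrow> 'a \<Rightarrow> bool) \<Rightarrow> 'a \<Rightarrow> 'a set" where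
  "Ostar X le x0 = {x\<in>X. le x0 x}"

definition Coin :: "'a set \<Rightarrow> ('a \<Rightarrow> 'a) \<Rightarrow> ('a \<Rightarrow> 'a) \<Rightarrow> 'a set" where
  "Coin X T S = {x\<in>X. T x = S x}"

definition covers_from_above ::
  "'a set \<Rightarrow> ('a \<Rightarrow> 'a \<Rightarrow> bool) \<Rightarrow> ('a \<Rightarrow> 'a) \<Rightarrow> ('a \<Rightarrow> 'a) \<Rightarrow> 'a set \<Rightarrow> bool" where
  "covers_from_above X le S T A \<longleftrightarrow>
     (\<forall>x\<in>A. le (S x) (T x) \<longrightarrow> (\<exists>y\<in>X. le x y \<and> S y = T x))"

definition Cstar :: "'a set \<Rightarrow> ('a \<Rightarrow> 'a) \<Rightarrow> ('a \<Rightarrow> 'a) \<Rightarrow> ('a \<Rightarrow> 'a \<Rightarrow> bool) \<Rightarrow> 'a set set" where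
  "Cstar X T S le = {C. is_chain X le C \<and>
     (\<forall>x\<in>C. le (S x) (T x)) \<and>
     (\<forall>x\<in>C. \<forall>y\<in>C. strict le x y \<longrightarrow> le (T x) (S y)) \<and>
     S ` C \<subseteq> T ` X}"

definition Cstar0 :: "'a set \<Rightarrow> 'a \<Rightarrow> ('a \<Rightarrow> 'a) \<Rightarrow> ('a \<Rightarrow> 'a) \<Rightarrow> ('a \<Rightarrow> 'a \<Rightarrow> bool) \<Rightarrow> 'a set set" where
  "Cstar0 X x0 T S le = {C \<in> Cstar X T S le. C \<subseteq> Ostar X le x0 \<and> S ` C \<subseteq> T ` (Ostar X le x0)}"

definition maximal_in :: "('a \<Rightarrow> 'a \<Rightarrow> bool) \<Rightarrow> 'a set \<Rightarrow> 'a \<Rightarrow> bool" where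
  "maximal_in le A w \<longleftrightarrow> w \<in> A \<and> \<not> (\<exists>u\<in>A. strict le w u)"

end

theory Submission
  imports Defs
begin

lemma sp_anti:
  assumes space: "preordered_s_regular_b_metric X d s le"
    and "x \<in> X" "y \<in> X" "le x y" "le y x"
  shows "x = y"
proof -
  have bm: "b_metric X d s" and po: "preorder_on X le"
    and reg: "\<forall>x\<in>X. \<forall>y\<in>X. \<forall>z\<in>X. le x y \<longrightarrow> le y z \<longrightarrow> max (d x y) (d y z) \<le> s\<^sup>2 * d x z"
    using space unfolding preordered_s_regular_b_metric_def by auto
  have "max (d x y) (d y x) \<le> s\<^sup>2 * d x x" using reg assms by blast
  moreover have "d x x = 0" using bm assms(2) unfolding b_metric_def by auto
  moreover have "d x y \<ge> 0" using bm assms(2,3) unfolding b_metric_def by auto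
  ultimately have "d x y = 0" by simp
  then show ?thesis using bm assms(2,3) unfolding b_metric_def by auto
qed

lemma sp_coin:
  assumes space: "preordered_s_regular_b_metric X d s le"
    and TX: "T ` X \<subseteq> X" and SX: "S ` X \<subseteq> X"
    and iso: "isotone X le T"
    and w: "w \<in> X" "le (T w) w" and z: "z \<in> X"
    and zi: "\<forall>i::nat. le (S w) ((S ^^ i) z) \<and> le (T w) (S w)"
    and lim: "(\<lambda>i. d ((T ^^ i) w) ((S ^^ i) z)) \<longlonglongrightarrow> 0"
  shows "T w = S w"
proof -
  have bm: "b_metric X d s" and po: "preorder_on X le"
    and reg: "\<forall>x\<in>X. \<forall>y\<in>X. \<forall>z\<in>X. le x y \<longrightarrow> le y z \<longrightarrow> max (d x y) (d y z) \<le> s\<^sup>2 * d x z"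
    using space unfolding preordered_s_regular_b_metric_def by auto
  have s1: "s \<ge> 1" using bm unfolding b_metric_def by auto
  have TiX: "(T ^^ i) w \<in> X" for i
    by (induction i) (use w TX in auto)
  have SiX: "(S ^^ i) z \<in> X" for i
    by (induction i) (use z SX in auto)
  have TwX: "T w \<in> X" and SwX: "S w \<in> X" using w TX SX by auto
  have dec: "le ((T ^^ Suc i) w) (T w)" for i
  proof (induction i)
    case 0 then show ?case using po TwX unfolding preorder_on_def by simp
  next
    case (Suc i)
    have "le ((T ^^ Suc i) w) w"
      using Suc po TiX[of "Suc i"] TwX w unfolding preorder_on_def by blast
    then have "le (T ((T ^^ Suc i) w)) (T w)"
      using iso TiX[of "Suc i"] w unfolding isotone_def by blast
    then show ?case by simp
  qed
  have bound: "d (T w) (S w) \<le> s\<^sup>2 * (s\<^sup>2 * d ((T ^^ Suc i) w) ((S ^^ Suc i) z))" for i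
  proof -
    let ?a = "(T ^^ Suc i) w" and ?b = "(S ^^ Suc i) z"
    have tws: "le (T w) (S w)" using zi by blast
    have "le ?a (S w)" using dec[of i] tws po TiX[of "Suc i"] TwX SwX
      unfolding preorder_on_def by blast
    have 1: "d (T w) (S w) \<le> s\<^sup>2 * d ?a (S w)"
      using reg TiX[of "Suc i"] TwX SwX dec[of i] tws by fastforce
    have 2: "d ?a (S w) \<le> s\<^sup>2 * d ?a ?b"
      using reg TiX[of "Suc i"] SiX[of "Suc i"] SwX \<open>le ?a (S w)\<close> zi by fastforce
    have "s\<^sup>2 * d ?a (S w) \<le> s\<^sup>2 * (s\<^sup>2 * d ?a ?b)"
      by (rule mult_left_mono[OF 2]) simp
    then show ?thesis using 1 by linarith
  qed
  have "(\<lambda>i. d ((T ^^ Suc i) w) ((S ^^ Suc i) z)) \<longlonglongrightarrow> 0"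
    using LIMSEQ_Suc[OF lim] by simp
  then have "(\<lambda>i. s\<^sup>2 * (s\<^sup>2 * d ((T ^^ Suc i) w) ((S ^^ Suc i) z))) \<longlonglongrightarrow> s\<^sup>2 * (s\<^sup>2 * 0)"
    by (intro tendsto_mult tendsto_const)
  then have "d (T w) (S w) \<le> s\<^sup>2 * (s\<^sup>2 * 0)"
    by (rule LIMSEQ_le_const) (use bound in blast)
  moreover have "d (T w) (S w) \<ge> 0" using bm TwX SwX unfolding b_metric_def by auto
  ultimately have "d (T w) (S w) = 0" by simp
  then show ?thesis using bm TwX SwX unfolding b_metric_def by auto
qed

theorem theorem2p2:
  fixes X :: "'a set" and d :: "'a \<Rightarrow> 'a \<Rightarrow> real" and s :: real
    and le :: "'a \<Rightarrow> 'a \<Rightarrow> bool" and T S :: "'a \<Rightarrow> 'a" and x0 :: 'a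
  assumes space: "preordered_s_regular_b_metric X d s le"
    and TX: "T ` X \<subseteq> X" and SX: "S ` X \<subseteq> X"
    and x0X: "x0 \<in> X" and x0: "le (S x0) (T x0)"
    and iso: "isotone X le T"
    and cover: "covers_from_above X le S T (Ostar X le x0)"
    and chains: "\<forall>C\<in>Cstar0 X x0 T S le. \<exists>w\<in>X. (\<forall>x\<in>C. le x w) \<and> le (T w) w \<and>
        (\<exists>z\<in>X. (\<forall>i::nat. le (S w) ((S ^^ i) z) \<and> le (T w) (S w)) \<and>
           (\<lambda>i. d ((T ^^ i) w) ((S ^^ i) z)) \<longlonglongrightarrow> 0)"
  shows "Coin X T S \<inter> Ostar X le x0 \<noteq> {} \<and>
         (\<exists>w. maximal_in le (Coin X T S \<inter> Ostar X le x0) w)"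
proof -
  have po: "preorder_on X le"
    using space unfolding preordered_s_regular_b_metric_def by auto
  let ?A = "Coin X T S \<inter> Ostar X le x0"
  have ub: "\<exists>w\<in>X. (\<forall>x\<in>C. le x w) \<and> T w = S w" if "C \<in> Cstar0 X x0 T S le" for C
  proof -
    have "\<exists>w\<in>X. (\<forall>x\<in>C. le x w) \<and> le (T w) w \<and>
        (\<exists>z\<in>X. (\<forall>i::nat. le (S w) ((S ^^ i) z) \<and> le (T w) (S w)) \<and>
           (\<lambda>i. d ((T ^^ i) w) ((S ^^ i) z)) \<longlonglongrightarrow> 0)"
      using chains that by (rule bspec)
    then obtain w where w1: "w \<in> X" and H: "(\<forall>x\<in>C. le x w) \<and> le (T w) w \<and>
        (\<exists>z\<in>X. (\<forall>i::nat. le (S w) ((S ^^ i) z) \<and> le (T w) (S w)) \<and>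
           (\<lambda>i. d ((T ^^ i) w) ((S ^^ i) z)) \<longlonglongrightarrow> 0)" ..
    note w = w1 H[THEN conjunct1] H[THEN conjunct2, THEN conjunct1]
    note ez = H[THEN conjunct2, THEN conjunct2]
    from ez obtain z where z1: "z \<in> X" and H2: "(\<forall>i::nat. le (S w) ((S ^^ i) z) \<and> le (T w) (S w)) \<and>
           (\<lambda>i. d ((T ^^ i) w) ((S ^^ i) z)) \<longlonglongrightarrow> 0" ..
    note z = z1 H2[THEN conjunct1] H2[THEN conjunct2]
    have "T w = S w" using sp_coin[OF space TX SX iso w(1) w(3) z] .
    then show ?thesis using w by blast
  qed
  have ubA: "\<exists>w\<in>?A. \<forall>x\<in>C. le x w" if hC: "C \<in> Cstar0 X x0 T S le" and hx1: "x1 \<in> C" for C x1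
  proof -
    obtain w where w: "w \<in> X" "\<forall>x\<in>C. le x w" "T w = S w" using ub[OF hC] by blast
    have "x1 \<in> Ostar X le x0" using hC hx1 unfolding Cstar0_def by auto
    then have "le x0 x1" "x1 \<in> X" unfolding Ostar_def by auto
    moreover have "le x1 w" using w(2) hx1 by blast
    ultimately have "le x0 w" using po w(1) x0X unfolding preorder_on_def by blast
    then show ?thesis using w unfolding Coin_def Ostar_def by auto
  qed
  have x0O: "x0 \<in> Ostar X le x0" using po x0X unfolding Ostar_def preorder_on_def by auto
  obtain y where y: "y \<in> X" "le x0 y" "S y = T x0"
    using cover x0O x0 unfolding covers_from_above_def by blast
  have yO: "y \<in> Ostar X le x0" using y unfolding Ostar_def by auto
  have "le (T x0) (T y)" using iso x0X y unfolding isotone_def by blast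
  moreover have "le y y" using po y(1) unfolding preorder_on_def by blast
  ultimately have "{y} \<in> Cstar0 X x0 T S le"
    using y yO x0O x0X unfolding Cstar0_def Cstar_def is_chain_def strict_def
    by (simp add: image_eqI[where x=x0] rev_image_eqI)
  then obtain w0 where w0: "w0 \<in> ?A" using ubA by blast
  have "\<exists>m\<in>?A. \<forall>a\<in>?A. le m a \<longrightarrow> a = m"
  proof (rule predicate_Zorn)
    show "partial_order_on ?A (relation_of le ?A)"
    proof -
      have A: "?A \<subseteq> X" unfolding Coin_def by auto
      have r: "\<forall>x\<in>X. le x x" and t: "\<forall>x\<in>X. \<forall>y\<in>X. \<forall>z\<in>X. le x y \<longrightarrow> le y z \<longrightarrow> le x z"
        using po unfolding Defs.preorder_on_def by (blast, blast)
      have R: "relation_of le ?A = {(a, b). a \<in> ?A \<and> b \<in> ?A \<and> le a b}"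
        unfolding relation_of_def by simp
      have "refl_on ?A (relation_of le ?A)"
        unfolding refl_on_def R using r A by auto
      moreover have "trans (relation_of le ?A)"
      proof (rule transI)
        fix x y z assume "(x, y) \<in> relation_of le ?A" "(y, z) \<in> relation_of le ?A"
        then have h: "x \<in> ?A" "y \<in> ?A" "z \<in> ?A" "le x y" "le y z" unfolding R by auto
        then have "x \<in> X" "y \<in> X" "z \<in> X" using A by auto
        then have "le x z" using t h(4,5) by blast
        then show "(x, z) \<in> relation_of le ?A" unfolding R using h by auto
      qed
      moreover have "antisym (relation_of le ?A)"
      proof (rule antisymI)
        fix x y assume "(x, y) \<in> relation_of le ?A" "(y, x) \<in> relation_of le ?A"
        then have h: "x \<in> ?A" "y \<in> ?A" "le x y" "le y x" unfolding R by auto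
        then have "x \<in> X" "y \<in> X" using A by auto
        then show "x = y" using sp_anti[OF space _ _ h(3,4)] by simp
      qed
      moreover have "relation_of le ?A \<subseteq> ?A \<times> ?A" unfolding R by auto
      ultimately show ?thesis
        unfolding partial_order_on_def Order_Relation.preorder_on_def by simp
    qed
  next
    fix C assume C: "C \<in> Chains (relation_of le ?A)"
    show "\<exists>u\<in>?A. \<forall>a\<in>C. le a u"
    proof (cases "C = {}")
      case True then show ?thesis using w0 by blast
    next
      case False
      then obtain x1 where x1: "x1 \<in> C" by blast
      have CA: "C \<subseteq> ?A" and tot: "\<forall>a\<in>C. \<forall>b\<in>C. le a b \<or> le b a"
        using C unfolding Chains_def relation_of_def by auto
      have c1: "C \<subseteq> X" using CA unfolding Coin_def by auto
      have c2: "C \<subseteq> Ostar X le x0" using CA by auto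
      have c3: "\<forall>a\<in>C. le (S a) (T a)"
      proof
        fix a assume "a \<in> C"
        then have "a \<in> X" "T a = S a" using CA unfolding Coin_def by auto
        moreover have "S a \<in> X" using SX \<open>a \<in> X\<close> by blast
        ultimately show "le (S a) (T a)" using po unfolding preorder_on_def by simp
      qed
      have c4: "\<forall>a\<in>C. \<forall>b\<in>C. strict le a b \<longrightarrow> le (T a) (S b)"
      proof (intro ballI impI)
        fix a b assume ab: "a \<in> C" "b \<in> C" "strict le a b"
        then have "a \<in> X" "b \<in> X" "T b = S b" using CA unfolding Coin_def by auto
        moreover have "le a b" using ab(3) unfolding strict_def by simp
        ultimately have "le (T a) (T b)" using iso unfolding isotone_def by blast
        then show "le (T a) (S b)" using \<open>T b = S b\<close> by simp
      qed
      have c5: "S ` C \<subseteq> T ` Ostar X le x0"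
      proof
        fix v assume "v \<in> S ` C"
        then obtain a where a: "a \<in> C" "v = S a" by blast
        then have "a \<in> Ostar X le x0" "T a = S a" using CA unfolding Coin_def by auto
        then show "v \<in> T ` Ostar X le x0" using a by (metis image_eqI)
      qed
      have c6: "S ` C \<subseteq> T ` X" using c5 unfolding Ostar_def by auto
      have "C \<in> Cstar0 X x0 T S le"
        unfolding Cstar0_def Cstar_def is_chain_def using c1 c2 c3 c4 c5 c6 tot by simp
      then show ?thesis using ubA x1 by blast
    qed
  qed
  then obtain m where m: "m \<in> ?A" "\<forall>a\<in>?A. le m a \<longrightarrow> a = m" by blast
  have "maximal_in le ?A m" unfolding maximal_in_def strict_def using m by blast
  then show ?thesis using w0 by blast
qed

end
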